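(* Let $\lambda>0$. In a deterministic interest-rate model (as described in the context), if the long tail-Pareto rate $L^{(\lambda)}_{0\infty}$ of index $\lambda$ is finite, then for all $t\ge0$ the long tail-Pareto rate $L^{(\lambda)}_{t\infty}$ is finite and is given by $L^{(\lambda)}_{t\infty}=P_{0t}^{1/\lambda}L^{(\lambda)}_{0\infty}$.
   Context: A deterministic interest-rate model is given by a deterministic initial discount function $T\mapsto P_{0T}>0$ ($T\ge0$, $P_{00}=1$), with discount bond prices at later times determined by absence of arbitrage as $P_{tT}=P_{0T}/P_{0t}$ for $0\le t<T$. For $\lambda>0$, the tail-Pareto rate $L^{(\lambda)}_{tT}$ is defined by $P_{tT}=\left[1+\lambda^{-1}(T-t)L^{(\lambda)}_{tT}\right]^{-\lambda}$, and the long tail-Pareto rate is $L^{(\lambda)}_{t\infty}=\limsup_{T\to\infty}L^{(\lambda)}_{tT}$. *)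

theory Defs
  imports "HOL-Analysis.Analysis"
begin

definition bond_price :: "(real \<Rightarrow> real) \<Rightarrow> real \<Rightarrow> real \<Rightarrow> real" where
  "bond_price P0 t T = P0 T / P0 t"

text \<open>Tail-Pareto rate: the unique L with P_{tT} = (1 + (T-t) L / lam) powr (-lam),
  i.e. L = lam * (P_{tT} powr (-1/lam) - 1) / (T - t), for t < T.\<close>
definition tail_pareto_rate :: "real \<Rightarrow> (real \<Rightarrow> real) \<Rightarrow> real \<Rightarrow> real \<Rightarrow> real" where
  "tail_pareto_rate lam P0 t T = lam * (bond_price P0 t T powr (-1/lam) - 1) / (T - t)"

definition long_tail_pareto_rate :: "real \<Rightarrow> (real \<Rightarrow> real) \<Rightarrow> real \<Rightarrow> ereal" where
  "long_tail_pareto_rate lam P0 t = Limsup at_top (\<lambda>T. ereal (tail_pareto_rate lam P0 t T))"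

end

theory Submission
  imports Defs "HOL-Real_Asymp.Real_Asymp"
begin

lemma Limsup_perturb:
  fixes f h :: "real \<Rightarrow> real"
  assumes h: "(h \<longlongrightarrow> 0) at_top"
  shows "Limsup at_top (\<lambda>x. ereal (f x + h x)) = Limsup at_top (\<lambda>x. ereal (f x))"
proof (rule antisym)
  show "Limsup at_top (\<lambda>x. ereal (f x + h x)) \<le> Limsup at_top (\<lambda>x. ereal (f x))"
  proof (rule ereal_le_epsilon2)
    fix e :: real assume e: "0 < e"
    have ev: "eventually (\<lambda>x. \<bar>h x\<bar> < e) at_top"
      using h e by (auto simp: tendsto_iff dist_real_def)
    have "Limsup at_top (\<lambda>x. ereal (f x + h x)) \<le> Limsup at_top (\<lambda>x. ereal (f x) + ereal e)"
      by (rule Limsup_mono) (use ev in \<open>eventually_elim, auto\<close>)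
    also have "\<dots> = Limsup at_top (\<lambda>x. ereal (f x)) + ereal e"
      by (rule Limsup_add_ereal_right) auto
    finally show "Limsup at_top (\<lambda>x. ereal (f x + h x)) \<le> Limsup at_top (\<lambda>x. ereal (f x)) + ereal e" .
  qed
  show "Limsup at_top (\<lambda>x. ereal (f x)) \<le> Limsup at_top (\<lambda>x. ereal (f x + h x))"
  proof (rule ereal_le_epsilon2)
    fix e :: real assume e: "0 < e"
    have ev: "eventually (\<lambda>x. \<bar>h x\<bar> < e) at_top"
      using h e by (auto simp: tendsto_iff dist_real_def)
    have "Limsup at_top (\<lambda>x. ereal (f x)) \<le> Limsup at_top (\<lambda>x. ereal (f x + h x) + ereal e)"
      by (rule Limsup_mono) (use ev in \<open>eventually_elim, auto\<close>)
    also have "\<dots> = Limsup at_top (\<lambda>x. ereal (f x + h x)) + ereal e"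
      by (rule Limsup_add_ereal_right) auto
    finally show "Limsup at_top (\<lambda>x. ereal (f x)) \<le> Limsup at_top (\<lambda>x. ereal (f x + h x)) + ereal e" .
  qed
qed

lemma alg:
  fixes a lam x t d T :: real
  assumes "T > 0" "d > 0" "T = d + t"
  shows "a * (lam * (x - 1) / T) + a * (lam * (x - 1) / T) * t / d + lam * (a - 1) / d
        = lam * (x * a - 1) / d"
proof -
  have "a * (lam * (x - 1) / T) + a * (lam * (x - 1) / T) * t / d
      = a * (lam * (x - 1)) * (d + t) / (T * d)"
    using assms(1,2) by (simp add: field_simps)
  also have "\<dots> = a * (lam * (x - 1)) / d" using assms by simp
  finally show ?thesis using assms(2) by (simp add: field_simps)
qed

theorem proposition8:
  fixes P0 :: "real \<Rightarrow> real" and lam :: real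
  assumes lam_pos: "lam > 0"
    and P0_pos: "\<And>T. T \<ge> 0 \<Longrightarrow> P0 T > 0"
    and P0_0: "P0 0 = 1"
    and finite0: "\<bar>long_tail_pareto_rate lam P0 0\<bar> \<noteq> \<infinity>"
  shows "\<forall>t\<ge>0. \<bar>long_tail_pareto_rate lam P0 t\<bar> \<noteq> \<infinity> \<and>
           long_tail_pareto_rate lam P0 t
             = ereal (P0 t powr (1/lam)) * long_tail_pareto_rate lam P0 0"
proof (intro allI impI)
  fix t :: real assume t0: "t \<ge> 0"
  define a where "a = P0 t powr (1/lam)"
  have a_pos: "a > 0" using P0_pos[OF t0] by (simp add: a_def)
  define L0 where "L0 = (\<lambda>T. tail_pareto_rate lam P0 0 T)"
  obtain c where c: "long_tail_pareto_rate lam P0 0 = ereal c"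
    using finite0 by (cases "long_tail_pareto_rate lam P0 0") auto
  have L0_def': "\<And>T. T > 0 \<Longrightarrow> L0 T = lam * (P0 T powr (-1/lam) - 1) / T"
    by (simp add: L0_def tail_pareto_rate_def bond_price_def P0_0)
  have ub: "eventually (\<lambda>T. L0 T < c + 1) at_top"
  proof -
    have "Limsup at_top (\<lambda>T. ereal (L0 T)) < ereal (c + 1)"
      using c by (simp add: long_tail_pareto_rate_def L0_def)
    from Limsup_lessD[OF this] show ?thesis by simp
  qed
  have lb: "eventually (\<lambda>T. L0 T \<ge> - lam) at_top"
    using eventually_ge_at_top[of 1]
  proof eventually_elim
    case (elim T)
    have "P0 T powr (-1/lam) \<ge> 0" by simp
    hence "lam * (P0 T powr (-1/lam) - 1) \<ge> - lam" using lam_pos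
      by (simp add: right_diff_distrib)
    hence "lam * (P0 T powr (-1/lam) - 1) / T \<ge> - lam / T" using elim divide_right_mono[of "- lam" _ T]
      by simp
    moreover have "- lam / T \<ge> - lam" using elim lam_pos
      by (simp add: divide_le_eq)
    ultimately show ?case using L0_def'[of T] elim by simp
  qed
  define B where "B = \<bar>c + 1\<bar> + lam"
  define h where "h = (\<lambda>T. a * L0 T * t / (T - t) + lam * (a - 1) / (T - t))"
  have h1: "((\<lambda>T. a * L0 T * t / (T - t)) \<longlongrightarrow> 0) at_top"
  proof (rule Lim_null_comparison)
    show "eventually (\<lambda>T. norm (a * L0 T * t / (T - t)) \<le> a * B * t / (T - t)) at_top"
      using ub lb eventually_gt_at_top[of t]
    proof eventually_elim
      case (elim T)
      have "\<bar>L0 T\<bar> \<le> B" using elim B_def lam_pos by auto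
      hence "\<bar>a * L0 T * t\<bar> \<le> a * B * t" using a_pos t0
        by (simp add: abs_mult mult_left_mono mult_right_mono)
      thus ?case using elim by (simp add: abs_divide divide_right_mono)
    qed
    show "((\<lambda>T. a * B * t / (T - t)) \<longlongrightarrow> 0) at_top" by real_asymp
  qed
  have h2: "((\<lambda>T. lam * (a - 1) / (T - t)) \<longlongrightarrow> 0) at_top" by real_asymp
  have h: "(h \<longlongrightarrow> 0) at_top"
    unfolding h_def using tendsto_add[OF h1 h2] by simp
  have eq: "eventually (\<lambda>T. tail_pareto_rate lam P0 t T = a * L0 T + h T) at_top"
    using eventually_gt_at_top[of t] eventually_gt_at_top[of 0]
  proof eventually_elim
    case (elim T)
    define x where "x = P0 T powr (-1/lam)"
    have pT: "P0 T > 0" using elim by (intro P0_pos) simp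
    have pt: "P0 t > 0" using P0_pos[OF t0] .
    have "(P0 T / P0 t) powr (-1/lam) = x * a"
      using pT pt by (simp add: x_def a_def powr_divide powr_minus_divide)
    hence lt: "tail_pareto_rate lam P0 t T = lam * (x * a - 1) / (T - t)"
      by (simp add: tail_pareto_rate_def bond_price_def)
    have l0: "L0 T = lam * (x - 1) / T" using L0_def'[of T] elim by (simp add: x_def)
    have ne: "T - t \<noteq> 0" "T \<noteq> 0" using elim by auto
    define d where "d = T - t"
    have d: "d > 0" "T = d + t" "T > 0" using elim by (auto simp: d_def)
    have "a * (lam * (x - 1) / T) + a * (lam * (x - 1) / T) * t / d + lam * (a - 1) / d
        = lam * (x * a - 1) / d" using d by (intro alg) auto
    then show ?case unfolding lt h_def l0 d_def[symmetric] by simp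
  qed
  have "long_tail_pareto_rate lam P0 t
      = Limsup at_top (\<lambda>T. ereal (a * L0 T + h T))"
    unfolding long_tail_pareto_rate_def
    by (rule Limsup_eq) (use eq in \<open>eventually_elim, simp\<close>)
  also have "\<dots> = Limsup at_top (\<lambda>T. ereal (a * L0 T))"
    by (rule Limsup_perturb[OF h])
  also have "\<dots> = Limsup at_top (\<lambda>T. ereal a * ereal (L0 T))" by simp
  also have "\<dots> = ereal a * Limsup at_top (\<lambda>T. ereal (L0 T))"
    by (rule Limsup_ereal_mult_left) (use a_pos in auto)
  also have "\<dots> = ereal a * long_tail_pareto_rate lam P0 0"
    by (simp add: long_tail_pareto_rate_def L0_def)
  finally have fin: "long_tail_pareto_rate lam P0 t = ereal a * long_tail_pareto_rate lam P0 0" .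
  show "\<bar>long_tail_pareto_rate lam P0 t\<bar> \<noteq> \<infinity> \<and>
           long_tail_pareto_rate lam P0 t
             = ereal (P0 t powr (1/lam)) * long_tail_pareto_rate lam P0 0"
    using fin c by (simp add: a_def)
qed

end
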